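(* Let $N\ge 1$ be an integer and let $a(1),a(2),\dots$ be a sequence of real numbers such that $a(n+m)\le a(n)+a(m)$ holds for all integers $n,m$ with $N\le n\le m\le 2n$. Then $\lim_{n\to\infty} a(n)/n$ exists (possibly $-\infty$) and $$\lim_{n\to\infty}\frac{a(n)}{n}=\inf_{k\ge N}\frac{a(k)}{k}.$$ *)

theory Defs
  imports "HOL-Analysis.Analysis"
begin

end

theory Submission
  imports Defs
begin

lemma mult_bound:
  fixes a :: "nat \<Rightarrow> real" and N :: nat
  assumes h: "\<And>n m. N \<le> n \<Longrightarrow> n \<le> m \<Longrightarrow> m \<le> 2 * n \<Longrightarrow> a (n + m) \<le> a n + a m"
    and k: "k \<ge> N" "k \<ge> 1"
  shows "j \<ge> 1 \<Longrightarrow> a (j * k) \<le> real j * a k"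
proof (induction j rule: less_induct)
  case (less j)
  show ?case
  proof (cases "j = 1")
    case True then show ?thesis by simp
  next
    case False
    define p where "p = j div 2"
    define q where "q = j - p"
    have pq: "1 \<le> p" "p < j" "q < j" "p \<le> q" "q \<le> 2 * p" "j = p + q"
      using False less.prems unfolding p_def q_def by auto
    have "N \<le> p * k" using pq(1) k by (metis dual_order.trans mult_1 mult_le_mono1)
    moreover have "p * k \<le> q * k" "q * k \<le> 2 * (p * k)" using pq by auto
    ultimately have "a (p * k + q * k) \<le> a (p * k) + a (q * k)" using h by blast
    also have "\<dots> \<le> real p * a k + real q * a k"
      using less.IH[of p] less.IH[of q] pq by force
    finally show ?thesis using pq(6) by (simp add: algebra_simps)
  qed
qed

lemma lin_bound:
  fixes a :: "nat \<Rightarrow> real" and N :: nat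
  assumes h: "\<And>n m. N \<le> n \<Longrightarrow> n \<le> m \<Longrightarrow> m \<le> 2 * n \<Longrightarrow> a (n + m) \<le> a n + a m"
    and k: "k \<ge> N" "k \<ge> 1"
  defines "c \<equiv> a k / real k"
  defines "B \<equiv> Max ((\<lambda>t. a t - real t * c) ` {6*k..12*k})"
  shows "n \<ge> 6 * k \<Longrightarrow> a n \<le> real n * c + B"
proof (induction n rule: less_induct)
  case (less n)
  show ?case
  proof (cases "n \<le> 12 * k")
    case True
    have "a n - real n * c \<le> B" unfolding B_def
      by (rule Max_ge) (use True less.prems in auto)
    then show ?thesis by simp
  next
    case False
    define j where "j = (n div 2) div k"
    define t where "t = n - j * k"
    have d1: "j * k \<le> n div 2" unfolding j_def using div_times_less_eq_dividend by (simp add: mult.commute)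
    have d2: "n div 2 < j * k + k"
    proof -
      have "n div 2 = j * k + (n div 2) mod k" unfolding j_def by simp
      moreover have "(n div 2) mod k < k" using k(2) by simp
      ultimately show ?thesis by linarith
    qed
    have n2: "2 * (n div 2) \<le> n" "n \<le> 2 * (n div 2) + 1" by auto
    have j1: "j \<ge> 1"
    proof (rule ccontr)
      assume "\<not> 1 \<le> j" then have "j = 0" by simp
      then show False using d2 False by simp
    qed
    have jkN: "N \<le> j * k" using j1 k by (metis dual_order.trans mult_1 mult_le_mono1)
    have t1: "j * k \<le> t" "t \<le> 2 * (j * k)" "t < n" "t \<ge> 6 * k" "n = j * k + t"
      using d1 d2 n2 False j1 k unfolding t_def by (auto simp: nat_mult_le_cancel_disj)
    have "a n \<le> a (j * k) + a t" using h[OF jkN t1(1) t1(2)] t1(5) by simp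
    also have "\<dots> \<le> real j * a k + (real t * c + B)"
      using mult_bound[OF h k j1] less.IH[OF t1(3) t1(4)] by simp
    also have "real j * a k = real (j * k) * c" unfolding c_def using k by simp
    finally show ?thesis using t1(5) by (simp add: algebra_simps)
  qed
qed

theorem theorem2p1:
  fixes a :: "nat \<Rightarrow> real" and N :: nat
  assumes "N \<ge> 1"
    and "\<And>n m. N \<le> n \<Longrightarrow> n \<le> m \<Longrightarrow> m \<le> 2 * n \<Longrightarrow> a (n + m) \<le> a n + a m"
  shows "((\<lambda>n. ereal (a n / real n)) \<longlongrightarrow> (INF k\<in>{N..}. ereal (a k / real k))) sequentially"
proof -
  let ?f = "\<lambda>n. ereal (a n / real n)"
  let ?L = "INF k\<in>{N..}. ereal (a k / real k)"
  have lo: "?L \<le> Liminf sequentially ?f"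
  proof (rule Liminf_bounded)
    show "\<forall>\<^sub>F n in sequentially. ?L \<le> ?f n"
      using eventually_ge_at_top[of N] by eventually_elim (rule INF_lower, simp)
  qed
  have up: "Limsup sequentially ?f \<le> ?L"
  proof (rule INF_greatest)
    fix k assume kN: "k \<in> {N..}"
    then have k: "k \<ge> N" "k \<ge> 1" using assms(1) by auto
    define c where "c = a k / real k"
    define B where "B = Max ((\<lambda>t. a t - real t * c) ` {6*k..12*k})"
    have bd: "\<And>n. n \<ge> 6 * k \<Longrightarrow> a n \<le> real n * c + B"
      using lin_bound[OF assms(2) k] unfolding c_def B_def by blast
    have ev: "\<forall>\<^sub>F n in sequentially. ?f n \<le> ereal (c + B / real n)"
      using eventually_ge_at_top[of "6*k"]
    proof eventually_elim
      case (elim n)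
      then have "n > 0" using k by auto
      then have "a n / real n \<le> (real n * c + B) / real n"
        using bd[OF elim] by (simp add: divide_right_mono)
      also have "\<dots> = c + B / real n" using \<open>n > 0\<close> by (simp add: field_simps)
      finally show ?case by simp
    qed
    have "((\<lambda>n. c + B / real n) \<longlongrightarrow> c + 0) sequentially"
      by (intro tendsto_intros tendsto_divide_0[OF tendsto_const] filterlim_real_sequentially)
    then have lim: "((\<lambda>n. ereal (c + B / real n)) \<longlongrightarrow> ereal c) sequentially"
      by (simp add: tendsto_ereal)
    have "Limsup sequentially ?f \<le> Limsup sequentially (\<lambda>n. ereal (c + B / real n))"
      by (rule Limsup_mono[OF ev])
    also have "\<dots> = ereal c" by (rule lim_imp_Limsup[OF _ lim]) simp
    finally show "Limsup sequentially ?f \<le> ereal (a k / real k)" by (simp add: c_def)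
  qed
  have "Liminf sequentially ?f \<le> Limsup sequentially ?f" by (rule Liminf_le_Limsup) simp
  then show ?thesis using lo up
    by (intro Liminf_eq_Limsup) (auto intro: order.antisym)
qed

end
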